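(* Let $1\le k\le r$ and let $\mathscr I=[I_0,\dots,I_{k-1}]$ be a prime ideal of $\Omega_{H_{k-1}}$. Then $\mathcal{L}\mathscr I=[I_0,\dots,I_{k-1},(\mathrm{res}^k_{k-1})^{-1}(I_{k-1})]$ is a prime ideal of $\Omega_{H_k}$.
   Context: Fix a prime $p$ and an integer $r\ge0$. For $0\le k\le r$ let $R_k$ be the commutative ring which is free as a $\mathbb{Z}$-module with basis $X_{k,0},\dots,X_{k,k}$ and multiplication $X_{k,i}X_{k,j}=p^{k-\max(i,j)}X_{k,\min(i,j)}$; thus $X_{k,k}=1$, and an integer $n$ is identified with $nX_{k,k}$. For $0\le k\le\ell\le r$ define: the additive map $\mathrm{ind}^\ell_k:R_k\to R_\ell$, $X_{k,i}\mapsto X_{\ell,i}$; the ring homomorphism $\mathrm{res}^\ell_k:R_\ell\to R_k$, $\mathrm{res}^\ell_k(X_{\ell,i})=p^{\ell-k}X_{k,i}$ if $i\le k$ and $=p^{\ell-i}$ if $i\ge k$; and the multiplicative map $\mathrm{jnd}^\ell_k:R_k\to R_\ell$, $$\mathrm{jnd}^\ell_k\Big(\sum_{i=0}^k m_iX_{k,i}\Big)=m_kX_{\ell,\ell}+\sum_{k\le i<\ell}\frac{m_k^{p^{\ell-i}}-m_k^{p^{\ell-i-1}}}{p^{\ell-i}}X_{\ell,i}+\sum_{0\le i<k}\frac{(\sum_{s=i}^k m_sp^{k-s})^{p^{\ell-k}}-(\sum_{s=i+1}^k m_sp^{k-s})^{p^{\ell-k}}}{p^{\ell-i}}X_{\ell,i}$$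 ($m_i\in\mathbb{Z}$). For $k=\ell$ these maps are the identity. These data form the Burnside Tambara functor on $\mathbb{Z}/p^r\mathbb{Z}$; keeping indices $\le n$ gives $\Omega_{H_n}$. An ideal of $\Omega_{H_n}$ is a sequence $[I_0,\dots,I_n]$ of ideals $I_k\subseteq R_k$ such that for every $1\le k\le n$: $\mathrm{ind}^k_{k-1}(I_{k-1})\subseteq I_k$, $\mathrm{res}^k_{k-1}(I_k)\subseteq I_{k-1}$, $\mathrm{jnd}^k_{k-1}(I_{k-1})\subseteq I_k$. It is proper if $I_0\ne R_0$. A proper ideal is prime if for all $0\le\ell\le k\le n$, $a\in R_k$, $b\in R_\ell$: whenever $(\mathrm{jnd}^m_i\mathrm{res}^k_i(a))\cdot(\mathrm{jnd}^m_j\mathrm{res}^\ell_j(b))\in I_m$ for all $0\le i\le k$, $0\le j\le\ell$, $m=\max(i,j)$, then $a\in I_k$ or $b\in I_\ell$. *)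

theory Defs
  imports "HOL-Computational_Algebra.Primes"
begin

text \<open>Elements of R_k are represented by their coefficient functions
  a :: nat => int, a i being the coefficient of X_{k,i}; the carrier of R_k
  consists of those with a i = 0 for i > k.\<close>

definition Rcarrier :: "nat \<Rightarrow> (nat \<Rightarrow> int) set" where
  "Rcarrier k = {a. \<forall>i>k. a i = 0}"

text \<open>Multiplication in R_k: X_{k,i} X_{k,j} = p^(k - max i j) X_{k, min i j}.\<close>
definition Rmult :: "nat \<Rightarrow> nat \<Rightarrow> (nat \<Rightarrow> int) \<Rightarrow> (nat \<Rightarrow> int) \<Rightarrow> (nat \<Rightarrow> int)" where
  "Rmult p k a b = (\<lambda>m. if m \<le> k then
      (\<Sum>i\<le>k. \<Sum>j\<le>k. if min i j = m then a i * b j * int p ^ (k - max i j) else 0)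
    else 0)"

definition is_ideal :: "nat \<Rightarrow> nat \<Rightarrow> (nat \<Rightarrow> int) set \<Rightarrow> bool" where
  "is_ideal p k I \<longleftrightarrow> I \<subseteq> Rcarrier k \<and> (\<lambda>i. 0) \<in> I
     \<and> (\<forall>x\<in>I. \<forall>y\<in>I. (\<lambda>i. x i + y i) \<in> I)
     \<and> (\<forall>x\<in>I. (\<lambda>i. - x i) \<in> I)
     \<and> (\<forall>a\<in>Rcarrier k. \<forall>x\<in>I. Rmult p k a x \<in> I)"

definition ind :: "nat \<Rightarrow> nat \<Rightarrow> (nat \<Rightarrow> int) \<Rightarrow> (nat \<Rightarrow> int)" where
  "ind l k a = (\<lambda>i. if i \<le> k then a i else 0)"

definition res :: "nat \<Rightarrow> nat \<Rightarrow> nat \<Rightarrow> (nat \<Rightarrow> int) \<Rightarrow> (nat \<Rightarrow> int)" where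
  "res p l k a = (\<lambda>j. if j < k then int p ^ (l - k) * a j
                      else if j = k then (\<Sum>i\<in>{k..l}. a i * int p ^ (l - i))
                      else 0)"

text \<open>jnd^l_k : R_k -> R_l (the divisions are exact).\<close>
definition jnd :: "nat \<Rightarrow> nat \<Rightarrow> nat \<Rightarrow> (nat \<Rightarrow> int) \<Rightarrow> (nat \<Rightarrow> int)" where
  "jnd p l k a = (\<lambda>i.
     if i = l then a k
     else if k \<le> i \<and> i < l then
       (a k ^ (p ^ (l - i)) - a k ^ (p ^ (l - i - 1))) div (int p ^ (l - i))
     else if i < k then
       ((\<Sum>s\<in>{i..k}. a s * int p ^ (k - s)) ^ (p ^ (l - k))
        - (\<Sum>s\<in>{i+1..k}. a s * int p ^ (k - s)) ^ (p ^ (l - k))) div (int p ^ (l - i))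
     else 0)"

text \<open>Ideal of Omega_{H_n}: sequence I 0, ..., I n (values of I at indices > n are irrelevant).\<close>
definition is_Omega_ideal :: "nat \<Rightarrow> nat \<Rightarrow> (nat \<Rightarrow> (nat \<Rightarrow> int) set) \<Rightarrow> bool" where
  "is_Omega_ideal p n I \<longleftrightarrow>
     (\<forall>k\<le>n. is_ideal p k (I k))
     \<and> (\<forall>k. 1 \<le> k \<and> k \<le> n \<longrightarrow>
          ind k (k - 1) ` I (k - 1) \<subseteq> I k
        \<and> res p k (k - 1) ` I k \<subseteq> I (k - 1)
        \<and> jnd p k (k - 1) ` I (k - 1) \<subseteq> I k)"

definition is_Omega_prime :: "nat \<Rightarrow> nat \<Rightarrow> (nat \<Rightarrow> (nat \<Rightarrow> int) set) \<Rightarrow> bool" where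
  "is_Omega_prime p n I \<longleftrightarrow>
     is_Omega_ideal p n I \<and> I 0 \<noteq> Rcarrier 0
     \<and> (\<forall>l k a b. l \<le> k \<and> k \<le> n \<and> a \<in> Rcarrier k \<and> b \<in> Rcarrier l \<longrightarrow>
          (\<forall>i\<le>k. \<forall>j\<le>l.
             Rmult p (max i j) (jnd p (max i j) i (res p k i a)) (jnd p (max i j) j (res p l j b))
               \<in> I (max i j))
          \<longrightarrow> a \<in> I k \<or> b \<in> I l)"

definition Lift :: "nat \<Rightarrow> nat \<Rightarrow> (nat \<Rightarrow> (nat \<Rightarrow> int) set) \<Rightarrow> (nat \<Rightarrow> (nat \<Rightarrow> int) set)" where
  "Lift p k I = I(k := {a \<in> Rcarrier k. res p k (k - 1) a \<in> I (k - 1)})"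

end

theory Submission
  imports Defs "HOL-Number_Theory.Number_Theory"
begin

definition gh :: "nat \<Rightarrow> nat \<Rightarrow> nat \<Rightarrow> (nat \<Rightarrow> int) \<Rightarrow> int" where
  "gh p n t a = (\<Sum>i\<in>{t..n}. a i * int p ^ (n - i))"

lemma gh_step: "t \<le> n \<Longrightarrow> gh p n t a = a t * int p ^ (n - t) + gh p n (Suc t) a"
  by (simp add: gh_def sum.atLeast_Suc_atMost)

lemma gh_inj:
  assumes "p > 0" "a \<in> Rcarrier n" "b \<in> Rcarrier n" "\<forall>t\<le>n. gh p n t a = gh p n t b"
  shows "a = b"
proof
  fix t
  show "a t = b t"
  proof (cases "t \<le> n")
    case False thus ?thesis using assms(2,3) by (simp add: Rcarrier_def)
  next
    case True
    have "gh p n (Suc t) a = gh p n (Suc t) b"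
    proof (cases "Suc t \<le> n")
      case True thus ?thesis using assms(4) by blast
    next
      case False thus ?thesis by (simp add: gh_def)
    qed
    moreover have "gh p n t a = gh p n t b" using assms(4) True by blast
    ultimately have "a t * int p ^ (n - t) = b t * int p ^ (n - t)"
      using gh_step[OF True, of p a] gh_step[OF True, of p b] by simp
    thus ?thesis using assms(1) by simp
  qed
qed

lemma sum_atLeastAtMost_if: "(\<Sum>i\<in>{(t::nat)..n}. f i) = (\<Sum>i\<le>n. if t \<le> i then f i else (0::int))"
proof -
  have "{..n} \<inter> {x. t \<le> x} = {t..n}" by auto
  thus ?thesis by (simp add: sum.If_cases)
qed

lemma gh_mult:
  assumes "t \<le> n"
  shows "gh p n t (Rmult p n a b) = gh p n t a * gh p n t b"
proof -
  define F where "F i j = a i * b j * int p ^ (n - max i j) * int p ^ (n - min i j)" for i j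
  have "gh p n t (Rmult p n a b) = (\<Sum>m\<in>{t..n}. \<Sum>i\<le>n. \<Sum>j\<le>n. if min i j = m then F i j else 0)"
    unfolding gh_def Rmult_def F_def
    by (rule sum.cong) (auto simp: sum_distrib_right intro!: sum.cong)
  also have "\<dots> = (\<Sum>i\<le>n. \<Sum>j\<le>n. \<Sum>m\<in>{t..n}. if min i j = m then F i j else 0)"
    by (subst sum.swap) (rule sum.cong, simp, subst sum.swap, simp)
  also have "\<dots> = (\<Sum>i\<le>n. \<Sum>j\<le>n. if t \<le> min i j then F i j else 0)"
    by (rule sum.cong, simp, rule sum.cong, simp) (auto simp: sum.delta)
  also have "\<dots> = (\<Sum>i\<le>n. \<Sum>j\<le>n. (if t \<le> i then a i * int p ^ (n - i) else 0) * (if t \<le> j then b j * int p ^ (n - j) else 0))"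
  proof (rule sum.cong, simp, rule sum.cong, simp)
    fix i j assume "i \<in> {..n}" "j \<in> {..n}"
    have "int p ^ (n - max i j) * int p ^ (n - min i j) = int p ^ (n - i) * int p ^ (n - j)"
      by (cases "i \<le> j") (simp_all add: max_def min_def mult.commute)
    thus "(if t \<le> min i j then F i j else 0) = (if t \<le> i then a i * int p ^ (n - i) else 0) * (if t \<le> j then b j * int p ^ (n - j) else 0)"
      unfolding F_def by (simp add: algebra_simps)
  qed
  also have "\<dots> = gh p n t a * gh p n t b"
    unfolding gh_def sum_atLeastAtMost_if sum_product by simp
  finally show ?thesis .
qed

lemma gh_beyond: "n < t \<Longrightarrow> gh p n t a = 0"
  by (simp add: gh_def)

lemma res_carrier: "res p l k a \<in> Rcarrier k"
  by (simp add: Rcarrier_def res_def)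

lemma jnd_carrier: "k \<le> l \<Longrightarrow> jnd p l k a \<in> Rcarrier l"
  by (simp add: Rcarrier_def jnd_def)

lemma ind_carrier: "k \<le> l \<Longrightarrow> ind l k a \<in> Rcarrier l"
  by (simp add: Rcarrier_def ind_def)

lemma Rmult_carrier: "Rmult p k a b \<in> Rcarrier k"
  by (simp add: Rcarrier_def Rmult_def)

lemma gh_res:
  assumes "t \<le> n"
  shows "gh p n t (res p (Suc n) n a) = gh p (Suc n) t a"
  using assms
proof (induction t rule: inc_induct)
  case base
  show ?case
    using gh_step[of n n p "res p (Suc n) n a"] gh_step[of n "Suc n" p a]
      gh_step[of "Suc n" "Suc n" p a] gh_beyond[of n "Suc n" p] gh_beyond[of "Suc n" "Suc (Suc n)" p]
    by (simp add: res_def)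
next
  case (step t)
  have "gh p n t (res p (Suc n) n a) = res p (Suc n) n a t * int p ^ (n - t) + gh p (Suc n) (Suc t) a"
    using gh_step[of t n p "res p (Suc n) n a"] step by simp
  also have "res p (Suc n) n a t * int p ^ (n - t) = a t * int p ^ (Suc n - t)"
    using step by (simp add: res_def Suc_diff_le)
  finally show ?case using gh_step[of t "Suc n" p a] step by simp
qed

lemma res_trans:
  assumes "i \<le> m" "m \<le> k"
  shows "res p m i (res p k m a) = res p k i a"
proof
  fix j
  show "res p m i (res p k m a) j = res p k i a j"
  proof (cases "j = i")
    case False thus ?thesis using assms
      by (auto simp: res_def power_add[symmetric])
  next
    case True
    let ?r = "res p k m a"
    have "(\<Sum>s\<in>{i..m}. ?r s * int p ^ (m - s)) = (\<Sum>s\<in>{i..<Suc m}. ?r s * int p ^ (m - s))"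
      by (simp add: atLeastLessThanSuc_atLeastAtMost)
    also have "\<dots> = (\<Sum>s\<in>{i..<m}. ?r s * int p ^ (m - s)) + ?r m"
      using assms by (simp add: sum.atLeastLessThan_Suc)
    also have "(\<Sum>s\<in>{i..<m}. ?r s * int p ^ (m - s)) = (\<Sum>s\<in>{i..<m}. a s * int p ^ (k - s))"
    proof (rule sum.cong)
      fix s assume "s \<in> {i..<m}"
      hence "k - m + (m - s) = k - s" using assms by auto
      thus "?r s * int p ^ (m - s) = a s * int p ^ (k - s)" using \<open>s \<in> {i..<m}\<close>
        by (simp add: res_def power_add[symmetric])
    qed simp
    also have "?r m = (\<Sum>s\<in>{m..<Suc k}. a s * int p ^ (k - s))"
      by (simp add: res_def atLeastLessThanSuc_atLeastAtMost)
    also have "(\<Sum>s\<in>{i..<m}. a s * int p ^ (k - s)) + (\<Sum>s\<in>{m..<Suc k}. a s * int p ^ (k - s))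
       = (\<Sum>s\<in>{i..<Suc k}. a s * int p ^ (k - s))"
      using assms by (intro sum.atLeastLessThan_concat) auto
    finally show ?thesis using True assms by (simp add: res_def atLeastLessThanSuc_atLeastAtMost)
  qed
qed

lemma pow_p_dvd:
  fixes x y :: int
  assumes "int p ^ e dvd x - y" "1 \<le> e"
  shows "int p ^ Suc e dvd x ^ p - y ^ p"
proof -
  have "int p dvd int p ^ e" using assms(2) by (simp add: dvd_power)
  hence "int p dvd x - y" using assms(1) dvd_trans by blast
  hence c: "[x = y] (mod int p)" by (simp add: cong_iff_dvd_diff)
  define S where "S = (\<Sum>i<p. y ^ (p - Suc i) * x ^ i)"
  have "[S = (\<Sum>i<p. y ^ (p - Suc i) * y ^ i)] (mod int p)"
    unfolding S_def by (intro cong_sum cong_mult cong_pow c cong_refl)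
  also have "(\<Sum>i<p. y ^ (p - Suc i) * y ^ i) = (\<Sum>i<p. y ^ (p - 1))"
    by (rule sum.cong) (auto simp: power_add[symmetric])
  also have "\<dots> = int p * y ^ (p - 1)" by simp
  finally have "int p dvd S"
    by (metis cong_dvd_iff dvd_triv_left)
  hence "int p ^ e * int p dvd (x - y) * S" using assms(1) by (simp add: mult_dvd_mono)
  thus ?thesis unfolding S_def by (simp only: power_diff_sumr2 power_Suc2)
qed

lemma fermat_int:
  assumes "prime p"
  shows "int p dvd (a::int) ^ p - a"
proof -
  have p0: "p > 0" using assms prime_gt_0_nat by blast
  define b where "b = nat (a mod int p)"
  have bi: "int b = a mod int p" using p0 by (simp add: b_def)
  have c1: "[a = int b] (mod int p)" by (simp add: cong_def bi)
  have "[b ^ p = b] (mod p)"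
  proof (cases "p dvd b")
    case True
    thus ?thesis using p0 by (simp add: cong_def dvd_imp_mod_0 mod_0_imp_dvd)
      (metis dvd_imp_mod_0 dvd_power dvd_trans)
  next
    case False
    have "[b ^ (p - 1) = 1] (mod p)" by (rule fermat_theorem[OF assms False])
    hence "[b ^ (p - 1) * b = 1 * b] (mod p)" by (rule cong_scalar_right)
    moreover have "b ^ (p - 1) * b = b ^ p" using p0 by (simp add: power_Suc2[symmetric])
    ultimately show ?thesis by simp
  qed
  hence "[int b ^ p = int b] (mod int p)" using cong_int_iff by (metis of_nat_power)
  hence "[a ^ p = a] (mod int p)"
    by (meson c1 cong_pow cong_sym cong_trans)
  thus ?thesis by (simp add: cong_iff_dvd_diff)
qed


lemma gh_jnd:
  assumes "prime p" "t \<le> n"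
  shows "gh p (Suc n) t (jnd p (Suc n) n a) = (gh p n t a) ^ p"
  using assms(2)
proof (induction t rule: inc_induct)
  case base
  have "int p dvd a n ^ p - a n" by (rule fermat_int[OF assms(1)])
  hence d: "(a n ^ p - a n) div int p * int p = a n ^ p - a n" by simp
  have "gh p (Suc n) n (jnd p (Suc n) n a) = jnd p (Suc n) n a n * int p + jnd p (Suc n) n a (Suc n)"
    using gh_step[of n "Suc n" p "jnd p (Suc n) n a"] gh_step[of "Suc n" "Suc n" p "jnd p (Suc n) n a"]
      gh_beyond[of "Suc n" "Suc (Suc n)" p] by simp
  also have "\<dots> = a n ^ p" using d by (simp add: jnd_def)
  also have "a n = gh p n n a"
    using gh_step[of n n p a] gh_beyond[of n "Suc n" p] by simp
  finally show ?case .
next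
  case (step t)
  let ?G = "\<lambda>t. gh p n t a"
  have G: "?G t = a t * int p ^ (n - t) + ?G (Suc t)" using step by (simp add: gh_step)
  have "int p ^ (n - t) dvd ?G t - ?G (Suc t)" using G by simp
  hence "int p ^ Suc (n - t) dvd ?G t ^ p - ?G (Suc t) ^ p"
    using step by (intro pow_p_dvd) auto
  hence dv: "int p ^ (Suc n - t) dvd ?G t ^ p - ?G (Suc t) ^ p"
    using step by (simp add: Suc_diff_le)
  have j: "jnd p (Suc n) n a t = (?G t ^ p - ?G (Suc t) ^ p) div int p ^ (Suc n - t)"
    using step by (simp add: jnd_def gh_def)
  have "gh p (Suc n) t (jnd p (Suc n) n a) = jnd p (Suc n) n a t * int p ^ (Suc n - t) + ?G (Suc t) ^ p"
    using gh_step[of t "Suc n" p "jnd p (Suc n) n a"] step by simp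
  also have "\<dots> = ?G t ^ p" using dv unfolding j by simp
  finally show ?case .
qed

fun Rpow :: "nat \<Rightarrow> nat \<Rightarrow> (nat \<Rightarrow> int) \<Rightarrow> nat \<Rightarrow> (nat \<Rightarrow> int)" where
  "Rpow p n a 0 = (\<lambda>i. if i = n then 1 else 0)"
| "Rpow p n a (Suc e) = Rmult p n (Rpow p n a e) a"

lemma Rpow_carrier: "Rpow p n a e \<in> Rcarrier n"
  by (cases e) (simp_all add: Rmult_carrier, simp add: Rcarrier_def)

lemma gh_one: "t \<le> n \<Longrightarrow> gh p n t (\<lambda>i. if i = n then 1 else 0) = 1"
proof -
  assume "t \<le> n"
  have "gh p n t (\<lambda>i. if i = n then 1 else 0) = (\<Sum>i\<in>{t..n}. if i = n then 1 else 0)"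
    unfolding gh_def by (rule sum.cong) auto
  thus ?thesis using \<open>t \<le> n\<close> by simp
qed

lemma gh_Rpow: "t \<le> n \<Longrightarrow> gh p n t (Rpow p n a e) = (gh p n t a) ^ e"
  by (induction e) (simp_all add: gh_mult gh_one)

lemma res_jnd:
  assumes "prime p" "a \<in> Rcarrier n"
  shows "res p (Suc n) n (jnd p (Suc n) n a) = Rpow p n a p"
  using assms
  by (intro gh_inj[of p _ n] res_carrier Rpow_carrier)
     (auto simp: gh_res gh_jnd gh_Rpow prime_gt_0_nat)

lemma res_mult:
  assumes "p > 0"
  shows "res p (Suc n) n (Rmult p (Suc n) c x) = Rmult p n (res p (Suc n) n c) (res p (Suc n) n x)"
  using assms
  by (intro gh_inj[of p _ n] res_carrier Rmult_carrier) (auto simp: gh_res gh_mult)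


lemma smul_ideal:
  assumes "is_ideal p k I" "x \<in> I"
  shows "(\<lambda>i. int c * x i) \<in> I"
proof (induction c)
  case 0 thus ?case using assms(1) by (simp add: is_ideal_def)
next
  case (Suc c)
  hence "(\<lambda>i. int c * x i + x i) \<in> I" using assms by (simp add: is_ideal_def)
  thus ?case by (simp add: algebra_simps)
qed

lemma res_add: "res p l k (\<lambda>i. x i + y i) = (\<lambda>j. res p l k x j + res p l k y j)"
  by (auto simp: res_def sum.distrib algebra_simps)

lemma res_neg: "res p l k (\<lambda>i. - x i) = (\<lambda>j. - res p l k x j)"
  by (auto simp: res_def sum_negf)

lemma res_zero: "res p l k (\<lambda>i. 0) = (\<lambda>j. 0)"
  by (auto simp: res_def)

lemma res_ind:
  assumes "a \<in> Rcarrier n"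
  shows "res p (Suc n) n (ind (Suc n) n a) = (\<lambda>i. int p * a i)"
proof
  fix j show "res p (Suc n) n (ind (Suc n) n a) j = int p * a j"
    using assms by (auto simp: res_def ind_def Rcarrier_def)
qed

theorem corollary4:
  fixes p r k :: nat and I :: "nat \<Rightarrow> (nat \<Rightarrow> int) set"
  assumes "prime p" and "1 \<le> k" and "k \<le> r"
    and "is_Omega_prime p (k - 1) I"
  shows "is_Omega_prime p k (Lift p k I)"
proof -
  obtain n where k: "k = Suc n" using assms(2) by (cases k) auto
  have p0: "p > 0" using assms(1) prime_gt_0_nat by blast
  have OI: "is_Omega_ideal p n I" and nz: "I 0 \<noteq> Rcarrier 0"
    using assms(4) unfolding k is_Omega_prime_def by simp_all
  have PR: "\<And>l m a b. l \<le> m \<Longrightarrow> m \<le> n \<Longrightarrow> a \<in> Rcarrier m \<Longrightarrow> b \<in> Rcarrier l \<Longrightarrow>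
     (\<forall>i\<le>m. \<forall>j\<le>l. Rmult p (max i j) (jnd p (max i j) i (res p m i a)) (jnd p (max i j) j (res p l j b))
               \<in> I (max i j)) \<Longrightarrow> a \<in> I m \<or> b \<in> I l"
    using assms(4) unfolding k is_Omega_prime_def by simp
  define J where "J = {a \<in> Rcarrier (Suc n). res p (Suc n) n a \<in> I n}"
  have L: "Lift p k I = I(Suc n := J)" unfolding Lift_def J_def k by simp
  have OI1: "\<And>m. m \<le> n \<Longrightarrow> is_ideal p m (I m)" using OI by (simp add: is_Omega_ideal_def)
  have OI2: "\<And>m. 1 \<le> m \<Longrightarrow> m \<le> n \<Longrightarrow> ind m (m - 1) ` I (m - 1) \<subseteq> I m
        \<and> res p m (m - 1) ` I m \<subseteq> I (m - 1) \<and> jnd p m (m - 1) ` I (m - 1) \<subseteq> I m"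
    using OI by (simp add: is_Omega_ideal_def)
  have In: "is_ideal p n (I n)" using OI1 by simp
  have InC: "I n \<subseteq> Rcarrier n" using In by (simp add: is_ideal_def)
  have IJ: "is_ideal p (Suc n) J"
    unfolding is_ideal_def
  proof (intro conjI ballI)
    show "J \<subseteq> Rcarrier (Suc n)" by (auto simp: J_def)
    show "(\<lambda>i. 0) \<in> J" using In by (simp add: J_def res_zero is_ideal_def Rcarrier_def)
  next
    fix x y assume "x \<in> J" "y \<in> J"
    thus "(\<lambda>i. x i + y i) \<in> J" using In by (auto simp: J_def res_add is_ideal_def Rcarrier_def)
  next
    fix x assume "x \<in> J"
    thus "(\<lambda>i. - x i) \<in> J" using In by (auto simp: J_def res_neg is_ideal_def Rcarrier_def)
  next
    fix c x assume "c \<in> Rcarrier (Suc n)" "x \<in> J"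
    thus "Rmult p (Suc n) c x \<in> J" using In
      by (auto simp: J_def res_mult[OF p0] is_ideal_def Rmult_carrier res_carrier)
  qed
  have indJ: "ind (Suc n) n ` I n \<subseteq> J"
  proof
    fix y assume "y \<in> ind (Suc n) n ` I n"
    then obtain a where a: "a \<in> I n" "y = ind (Suc n) n a" by blast
    have "(\<lambda>i. int p * a i) \<in> I n" by (rule smul_ideal[OF In a(1)])
    thus "y \<in> J" using a InC by (auto simp: J_def ind_carrier res_ind)
  qed
  have resJ: "res p (Suc n) n ` J \<subseteq> I n" by (auto simp: J_def)
  have jndJ: "jnd p (Suc n) n ` I n \<subseteq> J"
  proof
    fix y assume "y \<in> jnd p (Suc n) n ` I n"
    then obtain a where a: "a \<in> I n" "y = jnd p (Suc n) n a" by blast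
    have "Rpow p n a p = Rmult p n (Rpow p n a (p - 1)) a"
      using p0 by (metis Rpow.simps(2) Suc_diff_1)
    also have "\<dots> \<in> I n" using In a(1) Rpow_carrier by (simp add: is_ideal_def)
    finally show "y \<in> J" using a InC assms(1)
      by (auto simp: J_def jnd_carrier res_jnd)
  qed
  have OL: "is_Omega_ideal p (Suc n) (I(Suc n := J))"
    unfolding is_Omega_ideal_def
  proof (intro conjI allI impI)
    fix m assume "m \<le> Suc n"
    thus "is_ideal p m ((I(Suc n := J)) m)" using IJ OI1 by (cases "m = Suc n") auto
  next
    fix m assume m: "1 \<le> m \<and> m \<le> Suc n"
    show "ind m (m - 1) ` (I(Suc n := J)) (m - 1) \<subseteq> (I(Suc n := J)) m"
      using m OI2[of m] indJ by (cases "m = Suc n") auto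
    show "res p m (m - 1) ` (I(Suc n := J)) m \<subseteq> (I(Suc n := J)) (m - 1)"
      using m OI2[of m] resJ by (cases "m = Suc n") auto
    show "jnd p m (m - 1) ` (I(Suc n := J)) (m - 1) \<subseteq> (I(Suc n := J)) m"
      using m OI2[of m] jndJ by (cases "m = Suc n") auto
  qed
  show ?thesis unfolding L is_Omega_prime_def
  proof (intro conjI allI impI)
    show "is_Omega_ideal p k (I(Suc n := J))" using OL k by simp
    show "(I(Suc n := J)) 0 \<noteq> Rcarrier 0" using nz by simp
  next
    fix l m a b
    assume H: "l \<le> m \<and> m \<le> k \<and> a \<in> Rcarrier m \<and> b \<in> Rcarrier l"
      and P: "\<forall>i\<le>m. \<forall>j\<le>l. Rmult p (max i j) (jnd p (max i j) i (res p m i a)) (jnd p (max i j) j (res p l j b))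
               \<in> (I(Suc n := J)) (max i j)"
    show "a \<in> (I(Suc n := J)) m \<or> b \<in> (I(Suc n := J)) l"
    proof (cases "m \<le> n")
      case True
      have "a \<in> I m \<or> b \<in> I l"
      proof (rule PR)
        show "\<forall>i\<le>m. \<forall>j\<le>l. Rmult p (max i j) (jnd p (max i j) i (res p m i a)) (jnd p (max i j) j (res p l j b))
               \<in> I (max i j)"
        proof (intro allI impI)
          fix i j assume "i \<le> m" "j \<le> l"
          thus "Rmult p (max i j) (jnd p (max i j) i (res p m i a)) (jnd p (max i j) j (res p l j b))
               \<in> I (max i j)" using P True H by (auto simp: max_def split: if_splits)
        qed
      qed (use H True in auto)
      thus ?thesis using True H by auto
    next
      case False
      hence m: "m = Suc n" using H k by simp
      define a' where "a' = res p (Suc n) n a"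
      have ra: "\<And>i. i \<le> n \<Longrightarrow> res p n i a' = res p (Suc n) i a"
        unfolding a'_def by (rule res_trans) auto
      show ?thesis
      proof (cases "l \<le> n")
        case True
        have "a' \<in> I n \<or> b \<in> I l"
        proof (rule PR)
          show "\<forall>i\<le>n. \<forall>j\<le>l. Rmult p (max i j) (jnd p (max i j) i (res p n i a')) (jnd p (max i j) j (res p l j b))
                 \<in> I (max i j)"
          proof (intro allI impI)
            fix i j assume ij: "i \<le> n" "j \<le> l"
            hence "Rmult p (max i j) (jnd p (max i j) i (res p m i a)) (jnd p (max i j) j (res p l j b))
               \<in> (I(Suc n := J)) (max i j)" using P m by auto
            moreover have "max i j \<noteq> Suc n" using ij True by auto
            ultimately show "Rmult p (max i j) (jnd p (max i j) i (res p n i a')) (jnd p (max i j) j (res p l j b))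
                 \<in> I (max i j)" using ra[OF ij(1)] m by simp
          qed
        qed (use H True in \<open>auto simp: a'_def res_carrier\<close>)
        thus ?thesis using True H m by (auto simp: J_def a'_def)
      next
        case False
        hence l: "l = Suc n" using H m by simp
        define b' where "b' = res p (Suc n) n b"
        have rb: "\<And>i. i \<le> n \<Longrightarrow> res p n i b' = res p (Suc n) i b"
          unfolding b'_def by (rule res_trans) auto
        have "a' \<in> I n \<or> b' \<in> I n"
        proof (rule PR)
          show "\<forall>i\<le>n. \<forall>j\<le>n. Rmult p (max i j) (jnd p (max i j) i (res p n i a')) (jnd p (max i j) j (res p n j b'))
                 \<in> I (max i j)"
          proof (intro allI impI)
            fix i j assume ij: "i \<le> n" "j \<le> n"
            hence "Rmult p (max i j) (jnd p (max i j) i (res p m i a)) (jnd p (max i j) j (res p l j b))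
               \<in> (I(Suc n := J)) (max i j)" using P m l by auto
            moreover have "max i j \<noteq> Suc n" using ij by auto
            ultimately show "Rmult p (max i j) (jnd p (max i j) i (res p n i a')) (jnd p (max i j) j (res p n j b'))
                 \<in> I (max i j)" using ra[OF ij(1)] rb[OF ij(2)] m l by simp
          qed
        qed (auto simp: a'_def b'_def res_carrier)
        thus ?thesis using H m l by (auto simp: J_def a'_def b'_def)
      qed
    qed
  qed
qed

end
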